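(* Let $G$ be a finite non-abelian group and $S\subseteq G$ a nonempty subset, with $\partial S$ its edge boundary in $\mathcal C_G$. (A) If $S$ satisfies any one of: (1) $S\cap Z(G)=\emptyset$; (2) $Z(G)\subseteq S$ and $|S|\le |G|/2$; (3) $S\subseteq Z(G)$; then $\frac{|\partial S|}{|S|}\ge |Z(G)|$. (B) If $S\cap Z(G)\neq\emptyset$ and $Z(G)\setminus S\neq\emptyset$, then $$|\partial S|=|S|\,|Z(G)|+|Z(G)\cap S|\big(|G|-2|S|-|Z(G)\setminus S|\big)+\sum_{u\in S\setminus Z(G)}|\mathcal F_u\setminus S|,$$ where $\mathcal F_u=C(u)\setminus Z(G)$ for $u\in G\setminus Z(G)$.
   Context: For a finite group $G$, the commuting graph $\mathcal C_G$ is the simple undirected graph with vertex set $G$ in which distinct $u,v\in G$ are adjacent iff $uv=vu$. $Z(G)$ is the center of $G$ and $C(v)=\{w\in G: wv=vw\}$ the centralizer of $v$. For $S\subseteq G$, $\partial S$ is the set of edges of $\mathcal C_G$ with one endpoint in $S$ and the other in $G\setminus S$. *)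

theory Defs
  imports Complex_Main "HOL-Algebra.Group"
begin

definition group_center :: "('a, 'b) monoid_scheme \<Rightarrow> 'a set" where
  "group_center G = {z \<in> carrier G. \<forall>g \<in> carrier G. z \<otimes>\<^bsub>G\<^esub> g = g \<otimes>\<^bsub>G\<^esub> z}"

definition centralizer_of :: "('a, 'b) monoid_scheme \<Rightarrow> 'a \<Rightarrow> 'a set" where
  "centralizer_of G v = {w \<in> carrier G. w \<otimes>\<^bsub>G\<^esub> v = v \<otimes>\<^bsub>G\<^esub> w}"

definition commuting_graph_edges :: "('a, 'b) monoid_scheme \<Rightarrow> 'a set set" where
  "commuting_graph_edges G =
     {{u, v} | u v. u \<in> carrier G \<and> v \<in> carrier G \<and> u \<noteq> v \<and> u \<otimes>\<^bsub>G\<^esub> v = v \<otimes>\<^bsub>G\<^esub> u}"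

definition edge_boundary :: "('a, 'b) monoid_scheme \<Rightarrow> 'a set \<Rightarrow> 'a set set" where
  "edge_boundary G S =
     {e \<in> commuting_graph_edges G. \<exists>u v. e = {u, v} \<and> u \<in> S \<and> v \<in> carrier G - S}"

definition F_set :: "('a, 'b) monoid_scheme \<Rightarrow> 'a \<Rightarrow> 'a set" where
  "F_set G u = centralizer_of G u - group_center G"

end

theory Submission
  imports Defs
begin

lemma card_boundary:
  assumes fin: "finite (carrier G)" and SG: "S \<subseteq> carrier G"
  shows "card (edge_boundary G S) = (\<Sum>u\<in>S. card (centralizer_of G u - S))"
proof -
  have eq: "edge_boundary G S = (\<lambda>(u,v). {u,v}) ` (SIGMA u:S. centralizer_of G u - S)"
  proof
    show "edge_boundary G S \<subseteq> (\<lambda>(u,v). {u,v}) ` (SIGMA u:S. centralizer_of G u - S)"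
    proof
      fix e assume "e \<in> edge_boundary G S"
      then obtain u v u' v' where e: "e = {u,v}" "u \<in> S" "v \<in> carrier G - S"
        and e2: "e = {u',v'}" "u' \<in> carrier G" "v' \<in> carrier G" "u' \<otimes>\<^bsub>G\<^esub> v' = v' \<otimes>\<^bsub>G\<^esub> u'"
        unfolding edge_boundary_def commuting_graph_edges_def by blast
      have "v \<otimes>\<^bsub>G\<^esub> u = u \<otimes>\<^bsub>G\<^esub> v" using e e2 by (auto simp: doubleton_eq_iff)
      hence "(u,v) \<in> (SIGMA u:S. centralizer_of G u - S)"
        using e unfolding centralizer_of_def by auto
      thus "e \<in> (\<lambda>(u,v). {u,v}) ` (SIGMA u:S. centralizer_of G u - S)"
        using e by force
    qed
  next
    show "(\<lambda>(u,v). {u,v}) ` (SIGMA u:S. centralizer_of G u - S) \<subseteq> edge_boundary G S"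
      using SG unfolding edge_boundary_def commuting_graph_edges_def centralizer_of_def
      by fastforce
  qed
  have inj: "inj_on (\<lambda>(u,v). {u,v}) (SIGMA u:S. centralizer_of G u - S)"
    by (auto simp: inj_on_def doubleton_eq_iff)
  have finS: "finite S" using fin SG finite_subset by blast
  have "card (edge_boundary G S) = card (SIGMA u:S. centralizer_of G u - S)"
    using eq inj card_image by metis
  also have "\<dots> = (\<Sum>u\<in>S. card (centralizer_of G u - S))"
    by (rule card_SigmaI) (use finS fin in \<open>auto intro: finite_subset simp: centralizer_of_def\<close>)
  finally show ?thesis .
qed

theorem lemma3p5:
  fixes G :: "('a, 'b) monoid_scheme" and S :: "'a set"
  assumes "group G" and "finite (carrier G)" and "\<not> comm_group G"
    and "S \<subseteq> carrier G" and "S \<noteq> {}"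
  shows "(((S \<inter> group_center G = {})
          \<or> (group_center G \<subseteq> S \<and> real (card S) \<le> real (card (carrier G)) / 2)
          \<or> (S \<subseteq> group_center G))
         \<longrightarrow> real (card (edge_boundary G S)) / real (card S) \<ge> real (card (group_center G)))
     \<and> (S \<inter> group_center G \<noteq> {} \<and> group_center G - S \<noteq> {} \<longrightarrow>
         int (card (edge_boundary G S)) =
           int (card S) * int (card (group_center G))
           + int (card (group_center G \<inter> S)) *
               (int (card (carrier G)) - 2 * int (card S) - int (card (group_center G - S)))
           + (\<Sum>u \<in> S - group_center G. int (card (F_set G u - S))))"
proof -
  interpret group G by fact
  note fin = assms(2) and SG = assms(4)
  define Z where "Z = group_center G"
  define n where "n = card (carrier G)"
  define a where "a = card (S \<inter> Z)"
  define b where "b = card (S - Z)"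
  define c where "c = card (Z - S)"
  define \<Sigma> where "\<Sigma> = (\<Sum>u \<in> S - Z. card (F_set G u - S))"
  have ZG: "Z \<subseteq> carrier G" unfolding Z_def group_center_def by auto
  have finS: "finite S" using fin SG finite_subset by blast
  have finZ: "finite Z" using fin ZG finite_subset by blast
  have cS: "card S = a + b" unfolding a_def b_def using finS
    by (metis card_Int_Diff)
  have cZ: "card Z = a + c" unfolding a_def c_def using finZ
    by (metis card_Int_Diff inf_commute)
  have c1: "card (centralizer_of G u - S) = n - card S" if "u \<in> S \<inter> Z" for u
  proof -
    have "centralizer_of G u = carrier G"
      using that unfolding centralizer_of_def Z_def group_center_def by auto
    thus ?thesis using card_Diff_subset[OF finS SG] n_def by simp
  qed
  have c2: "card (centralizer_of G u - S) = c + card (F_set G u - S)" if "u \<in> S - Z" for u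
  proof -
    have "centralizer_of G u - S = (Z - S) \<union> (F_set G u - S)"
      using that SG unfolding F_set_def Z_def centralizer_of_def group_center_def by auto
    moreover have "finite (F_set G u - S)"
      using fin unfolding F_set_def centralizer_of_def by (auto intro: finite_subset)
    moreover have "(Z - S) \<inter> (F_set G u - S) = {}" unfolding F_set_def Z_def by auto
    ultimately show ?thesis unfolding c_def using finZ by (simp add: card_Un_disjoint)
  qed
  have bd: "card (edge_boundary G S) = a * (n - card S) + b * c + \<Sigma>"
  proof -
    have "card (edge_boundary G S) = (\<Sum>u\<in>S. card (centralizer_of G u - S))"
      by (rule card_boundary[OF fin SG])
    also have "\<dots> = (\<Sum>u\<in>S \<inter> Z. card (centralizer_of G u - S)) + (\<Sum>u\<in>S - Z. card (centralizer_of G u - S))"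
      using finS by (rule sum.Int_Diff)
    also have "(\<Sum>u\<in>S \<inter> Z. card (centralizer_of G u - S)) = a * (n - card S)"
      using c1 a_def by simp
    also have "(\<Sum>u\<in>S - Z. card (centralizer_of G u - S)) = (\<Sum>u\<in>S - Z. c + card (F_set G u - S))"
      using c2 by simp
    also have "\<dots> = b * c + \<Sigma>" unfolding \<Sigma>_def b_def by (simp add: sum.distrib)
    finally show ?thesis by simp
  qed
  have Sn: "card S \<le> n" unfolding n_def using card_mono[OF fin SG] .
  have n2: "2 * card Z \<le> n"
  proof -
    obtain g where g: "g \<in> carrier G" "g \<notin> Z"
    proof (rule ccontr)
      assume "\<not> thesis"
      hence "\<forall>g\<in>carrier G. g \<in> Z" using that by blast
      hence "comm_group G"
        by (intro group_comm_groupI) (auto simp: Z_def group_center_def)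
      with assms(3) show False by simp
    qed
    have "(\<lambda>x. g \<otimes>\<^bsub>G\<^esub> x) ` Z \<subseteq> carrier G - Z"
    proof
      fix y assume "y \<in> (\<lambda>x. g \<otimes>\<^bsub>G\<^esub> x) ` Z"
      then obtain x where x: "x \<in> Z" "y = g \<otimes>\<^bsub>G\<^esub> x" by auto
      have xc: "x \<in> carrier G" using x ZG by auto
      have "y \<notin> Z"
      proof
        assume yZ: "y \<in> Z"
        have "g \<in> Z" unfolding Z_def group_center_def
        proof (intro CollectI conjI ballI)
          show "g \<in> carrier G" by fact
          fix h assume h: "h \<in> carrier G"
          have "g \<otimes>\<^bsub>G\<^esub> x \<otimes>\<^bsub>G\<^esub> h = h \<otimes>\<^bsub>G\<^esub> (g \<otimes>\<^bsub>G\<^esub> x)" using yZ x h unfolding Z_def group_center_def by auto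
          moreover have "g \<otimes>\<^bsub>G\<^esub> x \<otimes>\<^bsub>G\<^esub> h = g \<otimes>\<^bsub>G\<^esub> h \<otimes>\<^bsub>G\<^esub> x"
            using x h g xc unfolding Z_def group_center_def by (simp add: m_assoc)
          ultimately have "g \<otimes>\<^bsub>G\<^esub> h \<otimes>\<^bsub>G\<^esub> x = h \<otimes>\<^bsub>G\<^esub> g \<otimes>\<^bsub>G\<^esub> x" using h g xc by (simp add: m_assoc)
          thus "g \<otimes>\<^bsub>G\<^esub> h = h \<otimes>\<^bsub>G\<^esub> g" using h g xc by (simp add: right_cancel)
        qed
        with g show False by simp
      qed
      thus "y \<in> carrier G - Z" using x g xc by auto
    qed
    moreover have "inj_on (\<lambda>x. g \<otimes>\<^bsub>G\<^esub> x) Z" by (intro inj_onI) (metis Units_eq Units_l_cancel g(1) subsetD ZG)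
    ultimately have "card Z \<le> card (carrier G - Z)"
      using fin by (metis card_image card_mono finite_Diff)
    also have "\<dots> = n - card Z" using card_Diff_subset[OF finZ ZG] n_def by simp
    finally show ?thesis using card_mono[OF fin ZG] n_def by simp
  qed
  have Spos: "card S > 0" using finS assms(5) by auto
  have A: "real (card (edge_boundary G S)) \<ge> real (card S) * real (card Z)"
    if h: "S \<inter> Z = {} \<or> (Z \<subseteq> S \<and> real (card S) \<le> real n / 2) \<or> S \<subseteq> Z"
  proof -
    have "card S * card Z \<le> card (edge_boundary G S)"
    proof -
      consider "S \<inter> Z = {}" | "Z \<subseteq> S \<and> real (card S) \<le> real n / 2" | "S \<subseteq> Z" using h by blast
      thus ?thesis
      proof cases
        case 1
        hence "a = 0" "c = card Z" using a_def c_def by (auto simp: Diff_triv inf_commute)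
        thus ?thesis using bd cS by simp
      next
        case 2
        hence "c = 0" "2 * card S \<le> n" using c_def finZ by auto
        hence "card S \<le> n - card S" "card Z = a" using cZ by auto
        hence "card S * card Z \<le> a * (n - card S)"
          by (simp add: mult.commute)
        thus ?thesis using bd by linarith
      next
        case 3
        hence "b = 0" using b_def by (simp add: Diff_eq_empty_iff[THEN iffD2])
        hence "card Z \<le> n - card S" "card S = a" using cZ cS n2 by auto
        hence "card S * card Z \<le> a * (n - card S)" by simp
        thus ?thesis using bd by linarith
      qed
    qed
    thus ?thesis by (metis of_nat_le_iff of_nat_mult)
  qed
  show ?thesis
  proof (intro conjI impI)
    assume h: "S \<inter> group_center G = {} \<or> (group_center G \<subseteq> S \<and> real (card S) \<le> real (card (carrier G)) / 2) \<or> S \<subseteq> group_center G"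
    have "real (card (edge_boundary G S)) \<ge> real (card S) * real (card Z)"
      using A h Z_def n_def by blast
    thus "real (card (edge_boundary G S)) / real (card S) \<ge> real (card (group_center G))"
      using Spos Z_def by (simp add: pos_le_divide_eq mult.commute)
  next
    have e: "int (card (edge_boundary G S)) = int a * (int n - int (card S)) + int b * int c + int \<Sigma>"
      using bd Sn by (simp add: of_nat_diff)
    have s: "int \<Sigma> = (\<Sum>u \<in> S - Z. int (card (F_set G u - S)))" unfolding \<Sigma>_def by simp
    show "int (card (edge_boundary G S)) =
           int (card S) * int (card (group_center G))
           + int (card (group_center G \<inter> S)) *
               (int (card (carrier G)) - 2 * int (card S) - int (card (group_center G - S)))
           + (\<Sum>u \<in> S - group_center G. int (card (F_set G u - S)))"
      unfolding Z_def[symmetric] n_def[symmetric] s[symmetric] e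
      using cS cZ by (simp add: a_def c_def inf_commute algebra_simps)
  qed
qed

end
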